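(* Let $G=(X,E)$ be a graph with $|X|\ge4$. Then $G$ is a polar-cat if and only if there exist a vertex $v\in X$ and two ordered sets $Y=\{y_1,\dots,y_{k-1},y_k=v\}$ and $Z=\{z_1,\dots,z_{m-1},z_m=v\}$ with $k,m\ge2$, $Y\cap Z=\{v\}$ and $Y\cup Z=X$, such that one of the following holds: (a) $G[Y]$ and $G[Z]$ are connected and the edge set of $G$ consists exactly of the pairs $\{y_i,y_j\}$ with $1\le i<j\le k$, $i$ odd, and the pairs $\{z_i,z_j\}$ with $1\le i<j\le m$, $i$ odd; (b) $G[Y]$ and $G[Z]$ are disconnected and the edge set of $G$ consists exactly of the pairs $\{y_i,y_j\}$ with $1\le i<j\le k$, $i$ even, the pairs $\{z_i,z_j\}$ with $1\le i<j\le m$, $i$ even, and all pairs $\{y,z\}$ with $y\in Y\setminus\{v\}$, $z\in Z\setminus\{v\}$. In this case $G$ is a $(v,G[Y],G[Z])$-polar-cat.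
   Context: Graphs finite, simple, undirected; $G[W]$ induced subgraph; $G-v$ deletion; join of vertex-disjoint graphs adds all edges between them to the disjoint union; a cograph is a graph without induced $P_4$. A caterpillar is a rooted tree whose inner vertices each have two children and induce a path with the root at one end; a cherry is a pair of leaves with a common parent. A cograph is caterpillar-explainable if its unique discriminating cotree (the labeled rooted tree explaining it in which adjacent inner vertices get different labels from $\{0,1\}$; $x,y$ adjacent iff their lowest common ancestor has label 1) is a caterpillar. $G$ is a $(v,G_1,G_2)$-pseudo-cograph if $G_1,G_2$ are induced subgraphs, $v\in V(G)$, with $V(G)=V(G_1)\cup V(G_2)$, $V(G_1)\cap V(G_2)=\{v\}$, $|V(G_1)|,|V(G_2)|>1$, $G_1,G_2$ cographs, and $G-v$ the join or disjoint union of $G_1-v,G_2-v$. Such $G$ with $|V(G)|\ge4$ is a $(v,G_1,G_2)$-polar-cat if either ($G_1,G_2$ both connected and $G-v$ the disjoint union of $G_1-v,G_2-v$) or ($G_1,G_2$ both disconnected and $G-v$ the join), and $G_1,G_2$ are caterpillar-explainable with $v$ part of a cherry in both explaining caterpillars. A polar-cat is a $(v,G_1,G_2)$-polar-cat for some $v,G_1,G_2$. *)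

theory Defs
  imports Main
begin

type_synonym 'a graph = "'a set \<times> 'a set set"

definition is_graph :: "'a graph \<Rightarrow> bool" where
  "is_graph G \<longleftrightarrow> finite (fst G) \<and>
     (\<forall>e\<in>snd G. \<exists>x y. e = {x, y} \<and> x \<noteq> y \<and> x \<in> fst G \<and> y \<in> fst G)"

definition induced :: "'a graph \<Rightarrow> 'a set \<Rightarrow> 'a graph" where
  "induced G W = (W, {e \<in> snd G. e \<subseteq> W})"

definition del_vertex :: "'a graph \<Rightarrow> 'a \<Rightarrow> 'a graph" where
  "del_vertex G v = induced G (fst G - {v})"

definition disj_union :: "'a graph \<Rightarrow> 'a graph \<Rightarrow> 'a graph" where
  "disj_union G H = (fst G \<union> fst H, snd G \<union> snd H)"

definition graph_join :: "'a graph \<Rightarrow> 'a graph \<Rightarrow> 'a graph" where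
  "graph_join G H = (fst G \<union> fst H,
     snd G \<union> snd H \<union> {{x, y} | x y. x \<in> fst G \<and> y \<in> fst H})"

definition adj_rel :: "'a graph \<Rightarrow> ('a \<times> 'a) set" where
  "adj_rel G = {(x, y). x \<in> fst G \<and> y \<in> fst G \<and> {x, y} \<in> snd G}"

definition connected_graph :: "'a graph \<Rightarrow> bool" where
  "connected_graph G \<longleftrightarrow> fst G \<noteq> {} \<and>
     (\<forall>x\<in>fst G. \<forall>y\<in>fst G. (x, y) \<in> (adj_rel G)\<^sup>*)"

text \<open>Cograph: no induced P4 (a-b-c-d).\<close>
definition cograph :: "'a graph \<Rightarrow> bool" where
  "cograph G \<longleftrightarrow> \<not> (\<exists>a\<in>fst G. \<exists>b\<in>fst G. \<exists>c\<in>fst G. \<exists>d\<in>fst G.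
      distinct [a, b, c, d] \<and> {a, b} \<in> snd G \<and> {b, c} \<in> snd G \<and> {c, d} \<in> snd G \<and>
      {a, c} \<notin> snd G \<and> {b, d} \<notin> snd G \<and> {a, d} \<notin> snd G)"

text \<open>Rooted labelled trees: leaves carry vertices, inner vertices carry a label
(True = 1, False = 0) and an (ordered) list of children.\<close>

datatype 'a cotree = Leaf 'a | Inner bool "'a cotree list"

primrec leaves :: "'a cotree \<Rightarrow> 'a list" where
  "leaves (Leaf a) = [a]"
| "leaves (Inner b ts) = concat (map leaves ts)"

primrec subtrees :: "'a cotree \<Rightarrow> 'a cotree set" where
  "subtrees (Leaf a) = {Leaf a}"
| "subtrees (Inner b ts) = insert (Inner b ts) (\<Union> (set (map subtrees ts)))"

text \<open>x and y are adjacent according to T iff their lowest common ancestor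
(the inner vertex whose leaf set contains both, while no child's does)
has label 1.\<close>
definition cotree_adj :: "'a cotree \<Rightarrow> 'a \<Rightarrow> 'a \<Rightarrow> bool" where
  "cotree_adj T x y \<longleftrightarrow> (\<exists>ts. Inner True ts \<in> subtrees T \<and>
      x \<in> set (leaves (Inner True ts)) \<and> y \<in> set (leaves (Inner True ts)) \<and>
      \<not> (\<exists>t\<in>set ts. x \<in> set (leaves t) \<and> y \<in> set (leaves t)))"

definition explains :: "'a cotree \<Rightarrow> 'a graph \<Rightarrow> bool" where
  "explains T G \<longleftrightarrow> distinct (leaves T) \<and> set (leaves T) = fst G \<and>
     (\<forall>b ts. Inner b ts \<in> subtrees T \<longrightarrow> length ts \<ge> 2) \<and>
     (\<forall>x\<in>fst G. \<forall>y\<in>fst G. x \<noteq> y \<longrightarrow> ({x, y} \<in> snd G \<longleftrightarrow> cotree_adj T x y))"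

definition discriminating :: "'a cotree \<Rightarrow> bool" where
  "discriminating T \<longleftrightarrow> (\<forall>b ts. Inner b ts \<in> subtrees T \<longrightarrow>
      (\<forall>b' ts'. Inner b' ts' \<in> set ts \<longrightarrow> b' \<noteq> b))"

text \<open>Caterpillar: every inner vertex has exactly two children and at most one
inner child (so the inner vertices induce a path with the root at one end).\<close>
definition caterpillar :: "'a cotree \<Rightarrow> bool" where
  "caterpillar T \<longleftrightarrow> (\<forall>b ts. Inner b ts \<in> subtrees T \<longrightarrow>
      length ts = 2 \<and> card {i. i < length ts \<and> (\<exists>b' ts'. ts ! i = Inner b' ts')} \<le> 1)"

definition in_cherry :: "'a cotree \<Rightarrow> 'a \<Rightarrow> bool" where
  "in_cherry T v \<longleftrightarrow> (\<exists>b ts w. Inner b ts \<in> subtrees T \<and> length ts = 2 \<and>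
      Leaf v \<in> set ts \<and> Leaf w \<in> set ts \<and> w \<noteq> v)"

text \<open>The discriminating cotree of a cograph is unique, so "the explaining caterpillar"
is any discriminating caterpillar cotree explaining G.\<close>
definition caterpillar_explainable :: "'a graph \<Rightarrow> bool" where
  "caterpillar_explainable G \<longleftrightarrow>
     (\<exists>T. explains T G \<and> discriminating T \<and> caterpillar T)"

definition cat_with_cherry :: "'a graph \<Rightarrow> 'a \<Rightarrow> bool" where
  "cat_with_cherry G v \<longleftrightarrow>
     (\<exists>T. explains T G \<and> discriminating T \<and> caterpillar T \<and> in_cherry T v)"

definition pseudo_cograph :: "'a graph \<Rightarrow> 'a \<Rightarrow> 'a set \<Rightarrow> 'a set \<Rightarrow> bool" where
  "pseudo_cograph G v X1 X2 \<longleftrightarrow>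
     X1 \<subseteq> fst G \<and> X2 \<subseteq> fst G \<and> v \<in> fst G \<and>
     fst G = X1 \<union> X2 \<and> X1 \<inter> X2 = {v} \<and> card X1 > 1 \<and> card X2 > 1 \<and>
     cograph (induced G X1) \<and> cograph (induced G X2) \<and>
     (del_vertex G v = graph_join (del_vertex (induced G X1) v) (del_vertex (induced G X2) v) \<or>
      del_vertex G v = disj_union (del_vertex (induced G X1) v) (del_vertex (induced G X2) v))"

definition polar_cat_at :: "'a graph \<Rightarrow> 'a \<Rightarrow> 'a set \<Rightarrow> 'a set \<Rightarrow> bool" where
  "polar_cat_at G v X1 X2 \<longleftrightarrow>
     pseudo_cograph G v X1 X2 \<and> card (fst G) \<ge> 4 \<and>
     ((connected_graph (induced G X1) \<and> connected_graph (induced G X2) \<and>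
       del_vertex G v = disj_union (del_vertex (induced G X1) v) (del_vertex (induced G X2) v)) \<or>
      (\<not> connected_graph (induced G X1) \<and> \<not> connected_graph (induced G X2) \<and>
       del_vertex G v = graph_join (del_vertex (induced G X1) v) (del_vertex (induced G X2) v))) \<and>
     caterpillar_explainable (induced G X1) \<and> caterpillar_explainable (induced G X2) \<and>
     cat_with_cherry (induced G X1) v \<and> cat_with_cherry (induced G X2) v"

definition polar_cat :: "'a graph \<Rightarrow> bool" where
  "polar_cat G \<longleftrightarrow> (\<exists>v X1 X2. polar_cat_at G v X1 X2)"

text \<open>Lists ys = [y_1, ..., y_k], with y_i = ys ! (i - 1), 1-based indices as in the paper.\<close>
definition odd_edges :: "'a list \<Rightarrow> 'a set set" where
  "odd_edges ys = {{ys ! (i - 1), ys ! (j - 1)} | i j. 1 \<le> i \<and> i < j \<and> j \<le> length ys \<and> odd i}"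

definition even_edges :: "'a list \<Rightarrow> 'a set set" where
  "even_edges ys = {{ys ! (i - 1), ys ! (j - 1)} | i j. 1 \<le> i \<and> i < j \<and> j \<le> length ys \<and> even i}"

definition polar_cat_condition :: "'a graph \<Rightarrow> 'a \<Rightarrow> 'a list \<Rightarrow> 'a list \<Rightarrow> bool" where
  "polar_cat_condition G v ys zs \<longleftrightarrow>
     v \<in> fst G \<and> distinct ys \<and> distinct zs \<and> length ys \<ge> 2 \<and> length zs \<ge> 2 \<and>
     last ys = v \<and> last zs = v \<and> set ys \<inter> set zs = {v} \<and> set ys \<union> set zs = fst G \<and>
     ((connected_graph (induced G (set ys)) \<and> connected_graph (induced G (set zs)) \<and>
       snd G = odd_edges ys \<union> odd_edges zs) \<or>
      (\<not> connected_graph (induced G (set ys)) \<and> \<not> connected_graph (induced G (set zs)) \<and>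
       snd G = even_edges ys \<union> even_edges zs \<union>
         {{y, z} | y z. y \<in> set ys - {v} \<and> z \<in> set zs - {v}}))"

end

theory Submission imports Defs begin

definition E0 :: "(nat \<Rightarrow> bool) \<Rightarrow> 'a list \<Rightarrow> 'a set set" where
  "E0 p ys = {{ys ! i, ys ! j} | i j. i < j \<and> j < length ys \<and> p i}"

definition sel :: "bool \<Rightarrow> nat \<Rightarrow> bool" where "sel b = (if b then even else odd)"

lemma sel_Suc: "(\<lambda>i. sel b (Suc i)) = sel (\<not> b)"
  by (auto simp: sel_def fun_eq_iff)

lemma sel_0[simp]: "sel b 0 = b" by (simp add: sel_def)

lemma odd_edges_E0: "odd_edges ys = E0 (sel True) ys"
  unfolding odd_edges_def E0_def sel_def
proof (intro set_eqI iffI)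
  fix e assume "e \<in> {{ys ! (i - 1), ys ! (j - 1)} |i j. 1 \<le> i \<and> i < j \<and> j \<le> length ys \<and> odd i}"
  then obtain i j where "e = {ys ! (i - 1), ys ! (j - 1)}" "1 \<le> i" "i < j" "j \<le> length ys" "odd i" by blast
  then show "e \<in> {{ys ! i, ys ! j} |i j. i < j \<and> j < length ys \<and> (if True then even else odd) i}"
    by (intro CollectI exI[of _ "i-1"] exI[of _ "j-1"]) auto
next
  fix e assume "e \<in> {{ys ! i, ys ! j} |i j. i < j \<and> j < length ys \<and> (if True then even else odd) i}"
  then obtain i j where "e = {ys ! i, ys ! j}" "i < j" "j < length ys" "even i" by auto
  then show "e \<in> {{ys ! (i - 1), ys ! (j - 1)} |i j. 1 \<le> i \<and> i < j \<and> j \<le> length ys \<and> odd i}"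
    by (intro CollectI exI[of _ "i+1"] exI[of _ "j+1"]) auto
qed

lemma even_edges_E0: "even_edges ys = E0 (sel False) ys"
  unfolding even_edges_def E0_def sel_def
proof (intro set_eqI iffI)
  fix e assume "e \<in> {{ys ! (i - 1), ys ! (j - 1)} |i j. 1 \<le> i \<and> i < j \<and> j \<le> length ys \<and> even i}"
  then obtain i j where "e = {ys ! (i - 1), ys ! (j - 1)}" "1 \<le> i" "i < j" "j \<le> length ys" "even i" by blast
  then show "e \<in> {{ys ! i, ys ! j} |i j. i < j \<and> j < length ys \<and> (if False then even else odd) i}"
    by (intro CollectI exI[of _ "i-1"] exI[of _ "j-1"]) auto
next
  fix e assume "e \<in> {{ys ! i, ys ! j} |i j. i < j \<and> j < length ys \<and> (if False then even else odd) i}"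
  then obtain i j where "e = {ys ! i, ys ! j}" "i < j" "j < length ys" "odd i" by auto
  then show "e \<in> {{ys ! (i - 1), ys ! (j - 1)} |i j. 1 \<le> i \<and> i < j \<and> j \<le> length ys \<and> even i}"
    by (intro CollectI exI[of _ "i+1"] exI[of _ "j+1"]) auto
qed

lemma E0_cons: "E0 p (a # ys) = (if p 0 then {{a, y} | y. y \<in> set ys} else {}) \<union> E0 (\<lambda>i. p (Suc i)) ys"
proof (intro set_eqI iffI)
  fix e assume "e \<in> E0 p (a # ys)"
  then obtain i j where e: "e = {(a#ys) ! i, (a#ys) ! j}" "i < j" "j < Suc (length ys)" "p i"
    unfolding E0_def by auto
  show "e \<in> (if p 0 then {{a, y} | y. y \<in> set ys} else {}) \<union> E0 (\<lambda>i. p (Suc i)) ys"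
  proof (cases i)
    case 0
    then obtain j' where "j = Suc j'" using e by (cases j) auto
    then show ?thesis using e 0 by auto
  next
    case (Suc i')
    then obtain j' where "j = Suc j'" using e by (cases j) auto
    then show ?thesis using e Suc unfolding E0_def by auto
  qed
next
  fix e assume "e \<in> (if p 0 then {{a, y} | y. y \<in> set ys} else {}) \<union> E0 (\<lambda>i. p (Suc i)) ys"
  then show "e \<in> E0 p (a # ys)"
  proof
    assume "e \<in> (if p 0 then {{a, y} | y. y \<in> set ys} else {})"
    then obtain y where "p 0" "e = {a, y}" "y \<in> set ys" by (auto split: if_splits)
    then obtain j where "j < length ys" "y = ys ! j" by (auto simp: in_set_conv_nth)
    then show ?thesis unfolding E0_def using \<open>p 0\<close> \<open>e = {a,y}\<close>
      by (intro CollectI exI[of _ 0] exI[of _ "Suc j"]) auto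
  next
    assume "e \<in> E0 (\<lambda>i. p (Suc i)) ys"
    then obtain i j where "e = {ys ! i, ys ! j}" "i < j" "j < length ys" "p (Suc i)"
      unfolding E0_def by auto
    then show ?thesis unfolding E0_def
      by (intro CollectI exI[of _ "Suc i"] exI[of _ "Suc j"]) auto
  qed
qed

lemma E0_mem: "e \<in> E0 p ys \<Longrightarrow> distinct ys \<Longrightarrow> \<exists>x y. e = {x,y} \<and> x \<noteq> y \<and> x \<in> set ys \<and> y \<in> set ys"
  unfolding E0_def by (fastforce simp: nth_eq_iff_index_eq)

lemma E0_K: assumes "distinct ys" "i < j" "j < length ys"
  shows "{ys!i, ys!j} \<in> E0 p ys \<longleftrightarrow> p i"
proof
  assume "{ys!i, ys!j} \<in> E0 p ys"
  then obtain i' j' where h: "{ys!i, ys!j} = {ys!i', ys!j'}" "i' < j'" "j' < length ys" "p i'"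
    unfolding E0_def by auto
  from h(1) have "(ys!i = ys!i' \<and> ys!j = ys!j') \<or> (ys!i = ys!j' \<and> ys!j = ys!i')"
    by (auto simp: doubleton_eq_iff)
  then have "(i = i' \<and> j = j') \<or> (i = j' \<and> j = i')"
    using assms h by (auto simp: nth_eq_iff_index_eq)
  then show "p i" using h assms by auto
next
  assume "p i" then show "{ys!i, ys!j} \<in> E0 p ys" unfolding E0_def using assms by auto
qed

lemma E0_K': assumes "distinct ys" "i < length ys" "j < length ys" "i \<noteq> j"
  shows "{ys!i,ys!j} \<in> E0 p ys \<longleftrightarrow> p (min i j)"
proof (cases "i < j")
  case True
  then show ?thesis using E0_K[OF assms(1) True assms(3), of p] by simp
next
  case False
  then have ji: "j < i" using assms by simp
  show ?thesis using E0_K[OF assms(1) ji assms(2), of p] False by (simp add: insert_commute)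
qed

lemma arith4: "p (min (a::nat) b) \<Longrightarrow> p (min b c) \<Longrightarrow> p (min c d) \<Longrightarrow> \<not> p (min a c) \<Longrightarrow> \<not> p (min b d) \<Longrightarrow> \<not> p (min a d) \<Longrightarrow> False"
  by (auto simp: min_def split: if_splits)

lemma noP4_E0: assumes "distinct ys" and *: "a \<in> set ys" "b \<in> set ys" "c \<in> set ys" "d \<in> set ys"
    "a \<noteq> b" "a \<noteq> c" "a \<noteq> d" "b \<noteq> c" "b \<noteq> d" "c \<noteq> d"
    "{a, b} \<in> E0 p ys" "{b, c} \<in> E0 p ys" "{c, d} \<in> E0 p ys" "{a, c} \<notin> E0 p ys" "{b, d} \<notin> E0 p ys"
    "{a, d} \<notin> E0 p ys"
  shows False
proof -
  obtain ia ib ic id where i: "ia < length ys" "ib < length ys" "ic < length ys" "id < length ys"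
    "a = ys!ia" "b = ys!ib" "c = ys!ic" "d = ys!id" using *(1-4) by (metis in_set_conv_nth)
  have ne: "ia \<noteq> ib" "ia \<noteq> ic" "ia \<noteq> id" "ib \<noteq> ic" "ib \<noteq> id" "ic \<noteq> id" using * i by auto
  note K = E0_K'[OF assms(1)]
  show False using * i ne K[of ia ib] K[of ib ic] K[of ic id] K[of ia ic] K[of ib id] K[of ia id]
    arith4[of p ia ib ic id] by auto
qed

lemma cograph_E0: assumes "distinct ys" shows "cograph (set ys, E0 p ys)"
  unfolding cograph_def using noP4_E0[OF assms] by (auto, blast)


fun cat :: "bool \<Rightarrow> 'a list \<Rightarrow> 'a cotree" where
  "cat b [] = Leaf undefined"
| "cat b [x] = Leaf x"
| "cat b (x # y # zs) = Inner b [Leaf x, cat (\<not> b) (y # zs)]"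

lemma subtrees_leaves: "s \<in> subtrees t \<Longrightarrow> set (leaves s) \<subseteq> set (leaves t)"
  by (induction t) auto

lemma subtrees_refl: "t \<in> subtrees t" by (cases t) auto

lemma subtrees_child: "t \<in> set ts \<Longrightarrow> subtrees t \<subseteq> subtrees (Inner b ts)"
  by auto

lemma cotree_adj_Leaf[simp]: "\<not> cotree_adj (Leaf a) x y"
  by (simp add: cotree_adj_def)

lemma cotree_adj_Inner: "cotree_adj (Inner b ts) x y \<longleftrightarrow>
   (b \<and> x \<in> set (leaves (Inner b ts)) \<and> y \<in> set (leaves (Inner b ts)) \<and>
     \<not>(\<exists>t\<in>set ts. x \<in> set (leaves t) \<and> y \<in> set (leaves t))) \<or> (\<exists>t\<in>set ts. cotree_adj t x y)"
     (is "?L \<longleftrightarrow> ?A \<or> ?B")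
proof
  assume ?L
  then obtain ts' where h: "Inner True ts' \<in> subtrees (Inner b ts)"
      "x \<in> set (leaves (Inner True ts'))" "y \<in> set (leaves (Inner True ts'))"
      "\<not> (\<exists>t\<in>set ts'. x \<in> set (leaves t) \<and> y \<in> set (leaves t))"
    unfolding cotree_adj_def by blast
  show "?A \<or> ?B"
  proof (cases "Inner True ts' = Inner b ts")
    case True then show ?thesis using h by auto
  next
    case False
    then obtain t where "t \<in> set ts" "Inner True ts' \<in> subtrees t" using h(1) by auto
    then show ?thesis using h unfolding cotree_adj_def by blast
  qed
next
  assume "?A \<or> ?B"
  then show ?L
  proof
    assume ?A then show ?L unfolding cotree_adj_def by (intro exI[of _ ts]) auto
  next
    assume ?B
    then obtain t where "t \<in> set ts" "cotree_adj t x y" by blast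
    then show ?L unfolding cotree_adj_def by auto
  qed
qed

lemma cotree_adj_leaves: "cotree_adj t x y \<Longrightarrow> x \<in> set (leaves t) \<and> y \<in> set (leaves t)"
  unfolding cotree_adj_def using subtrees_leaves by blast

lemma adj2: "a \<notin> set (leaves t) \<Longrightarrow> x \<noteq> y \<Longrightarrow> cotree_adj (Inner b [Leaf a, t]) x y \<longleftrightarrow>
   (b \<and> ((x = a \<and> y \<in> set (leaves t)) \<or> (y = a \<and> x \<in> set (leaves t)))) \<or> cotree_adj t x y"
  unfolding cotree_adj_Inner using cotree_adj_leaves[of t x y] by auto

lemma adj2': "a \<notin> set (leaves t) \<Longrightarrow> x \<noteq> y \<Longrightarrow> cotree_adj (Inner b [t, Leaf a]) x y \<longleftrightarrow>
   (b \<and> ((x = a \<and> y \<in> set (leaves t)) \<or> (y = a \<and> x \<in> set (leaves t)))) \<or> cotree_adj t x y"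
  unfolding cotree_adj_Inner using cotree_adj_leaves[of t x y] by auto

lemma E0_cons_sel: "x \<noteq> y \<Longrightarrow> {x,y} \<in> E0 (sel b) (a # ys) \<longleftrightarrow>
   (b \<and> ((x = a \<and> y \<in> set ys) \<or> (y = a \<and> x \<in> set ys))) \<or> {x,y} \<in> E0 (sel (\<not> b)) ys"
  unfolding E0_cons sel_Suc by (auto simp: doubleton_eq_iff)

lemma E0_Nil[simp]: "E0 p [] = {}" by (simp add: E0_def)

lemma E0_single[simp]: "E0 p [a] = {}" by (simp add: E0_def)

lemma cat_props: "distinct ys \<Longrightarrow> ys \<noteq> [] \<Longrightarrow> leaves (cat b ys) = ys \<and>
   (\<forall>x y. x \<noteq> y \<longrightarrow> (cotree_adj (cat b ys) x y \<longleftrightarrow> {x,y} \<in> E0 (sel b) ys))"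
proof (induction b ys rule: cat.induct)
  case (3 b x y zs)
  then have IH: "leaves (cat (\<not> b) (y # zs)) = y # zs"
    "\<And>u w. u \<noteq> w \<Longrightarrow> cotree_adj (cat (\<not> b) (y # zs)) u w \<longleftrightarrow> {u,w} \<in> E0 (sel (\<not> b)) (y # zs)"
    by auto
  have xn: "x \<notin> set (leaves (cat (\<not> b) (y # zs)))" using IH(1) 3(2) by simp
  show ?case
    using IH adj2[OF xn] E0_cons_sel[of _ _ b x "y#zs"] by auto
qed auto

lemma cat_label: "cat b ys = Inner b' ts \<Longrightarrow> b' = b"
  by (cases "(b, ys)" rule: cat.cases) auto

lemma cat_inner: "Inner b' ts \<in> subtrees (cat b ys) \<Longrightarrow>
   \<exists>a t. ts = [Leaf a, t] \<and> (\<forall>b'' ts''. t = Inner b'' ts'' \<longrightarrow> b'' \<noteq> b')"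
proof (induction b ys rule: cat.induct)
  case (3 b x y zs)
  then show ?case using cat_label[of "\<not> b" "y#zs"] by auto
qed auto

lemma card_le1: "card {i. i < length [Leaf a, t] \<and> (\<exists>b' ts'. [Leaf a, t] ! i = Inner b' ts')} \<le> 1"
proof -
  have s: "{i. i < length [Leaf a, t] \<and> (\<exists>b' ts'. [Leaf a, t] ! i = Inner b' ts')} \<subseteq> {1}"
    by (auto simp: less_Suc_eq)
  have "card {i. i < length [Leaf a, t] \<and> (\<exists>b' ts'. [Leaf a, t] ! i = Inner b' ts')} \<le> card {1::nat}"
    by (rule card_mono[OF _ s]) simp
  then show ?thesis by simp
qed

lemma cat_cat: "caterpillar (cat b ys)"
  unfolding caterpillar_def
proof (intro allI impI)
  fix b' ts assume "Inner b' ts \<in> subtrees (cat b ys)"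
  then obtain a t where "ts = [Leaf a, t]" using cat_inner by blast
  then show "length ts = 2 \<and> card {i. i < length ts \<and> (\<exists>b' ts'. ts ! i = Inner b' ts')} \<le> 1"
    using card_le1[of a t] by simp
qed

lemma cat_disc: "discriminating (cat b ys)"
  unfolding discriminating_def
proof (intro allI impI)
  fix b' ts b'' ts'' assume "Inner b' ts \<in> subtrees (cat b ys)" "Inner b'' ts'' \<in> set ts"
  moreover obtain a t where "ts = [Leaf a, t]" "\<forall>b'' ts''. t = Inner b'' ts'' \<longrightarrow> b'' \<noteq> b'"
    using cat_inner[OF calculation(1)] by blast
  ultimately show "b'' \<noteq> b'" by auto
qed

lemma cat_cherry: "distinct ys \<Longrightarrow> length ys \<ge> 2 \<Longrightarrow> in_cherry (cat b ys) (last ys)"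
proof (induction b ys rule: cat.induct)
  case (3 b x y zs)
  show ?case
  proof (cases zs)
    case Nil
    then show ?thesis using 3(2) unfolding in_cherry_def
      by (intro exI[of _ b] exI[of _ "[Leaf x, Leaf y]"] exI[of _ x]) auto
  next
    case (Cons z zs')
    then have "in_cherry (cat (\<not> b) (y # zs)) (last (y#zs))" using 3 by auto
    then obtain b' ts w where h: "Inner b' ts \<in> subtrees (cat (\<not> b) (y # zs))" "length ts = 2"
      "Leaf (last (y#zs)) \<in> set ts" "Leaf w \<in> set ts" "w \<noteq> last (y#zs)"
      unfolding in_cherry_def by blast
    have "subtrees (cat (\<not> b) (y # zs)) \<subseteq> subtrees (cat b (x # y # zs))" by auto
    then show ?thesis unfolding in_cherry_def using h by (metis last_ConsR list.distinct(1) subsetD)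
  qed
qed auto

lemma cat_explains: assumes "distinct ys" "length ys \<ge> 2"
  shows "explains (cat b ys) (set ys, E0 (sel b) ys)"
proof -
  have ne: "ys \<noteq> []" using assms by auto
  have L: "leaves (cat b ys) = ys" using cat_props[OF assms(1) ne, of b] by simp
  have A: "\<forall>x\<in>set ys. \<forall>y\<in>set ys. x \<noteq> y \<longrightarrow> ({x, y} \<in> E0 (sel b) ys \<longleftrightarrow> cotree_adj (cat b ys) x y)"
    using cat_props[OF assms(1) ne, of b] by simp
  have C: "\<forall>b' ts. Inner b' ts \<in> subtrees (cat b ys) \<longrightarrow> length ts \<ge> 2"
    using cat_inner[of _ _ b ys] by fastforce
  show ?thesis unfolding explains_def using L A C assms(1) by simp
qed


lemma cater_child: "caterpillar (Inner b ts) \<Longrightarrow> t \<in> set ts \<Longrightarrow> caterpillar t"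
  unfolding caterpillar_def by (meson subsetD subtrees_child)

lemma disc_child: assumes "discriminating (Inner b ts)" "t \<in> set ts" shows "discriminating t"
  unfolding discriminating_def
proof (intro allI impI)
  fix b' ts' b'' ts'' assume "Inner b' ts' \<in> subtrees t" "Inner b'' ts'' \<in> set ts'"
  moreover have "Inner b' ts' \<in> subtrees (Inner b ts)" using calculation(1) subtrees_child[OF assms(2)] by blast
  ultimately show "b'' \<noteq> b'" using assms(1) unfolding discriminating_def by blast
qed

lemma extract_cat:
  "caterpillar T \<Longrightarrow> discriminating T \<Longrightarrow> distinct (leaves T) \<Longrightarrow> in_cherry T v \<Longrightarrow> T = Inner b ts \<Longrightarrow>
   \<exists>ys. distinct ys \<and> set ys = set (leaves T) \<and> length ys \<ge> 2 \<and> last ys = v \<and>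
     (\<forall>x y. x \<noteq> y \<longrightarrow> (cotree_adj T x y \<longleftrightarrow> {x,y} \<in> E0 (sel b) ys))"
proof (induction T arbitrary: b ts v)
  case (Leaf x)
  then show ?case by simp
next
  case (Inner b0 ts0)
  then have T: "b0 = b" "ts0 = ts" by auto
  have rr: "Inner b ts \<in> subtrees (Inner b0 ts0)" using T subtrees_refl by simp
  have l2: "length ts = 2" using Inner.prems(1) rr unfolding caterpillar_def by blast
  then obtain t1 t2 where ts: "ts = [t1, t2]"
    by (metis (no_types, lifting) One_nat_def Suc_1 length_0_conv length_Suc_conv)
  have cardc: "card {i. i < length ts \<and> (\<exists>b' ts'. ts ! i = Inner b' ts')} \<le> 1"
    using Inner.prems(1) rr unfolding caterpillar_def by blast
  have dl: "distinct (leaves t1)" "distinct (leaves t2)" "set (leaves t1) \<inter> set (leaves t2) = {}"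
    using Inner.prems(3,5) ts by auto
  obtain b1 ts1 w where ch: "Inner b1 ts1 \<in> subtrees (Inner b ts)" "length ts1 = 2"
    "Leaf v \<in> set ts1" "Leaf w \<in> set ts1" "w \<noteq> v"
    using Inner.prems(4,5) unfolding in_cherry_def by auto
  show ?case
  proof (cases t1)
    case (Leaf p)
    note t1 = this
    show ?thesis
    proof (cases t2)
      case (Leaf q)
      have "Inner b1 ts1 = Inner b ts" using ch(1) ts t1 Leaf by auto
      then have vw: "{v, w} = {p, q}" using ch ts t1 Leaf by auto
      have adj: "x \<noteq> y \<Longrightarrow> cotree_adj (Inner b ts) x y \<longleftrightarrow> {x,y} \<in> E0 (sel b) [w, v]" for x y
        unfolding cotree_adj_Inner E0_cons using ts t1 Leaf vw by (auto simp: doubleton_eq_iff)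
      show ?thesis using ch(5) vw adj Inner.prems(5) ts t1 Leaf
        by (intro exI[of _ "[w, v]"]) auto
    next
      case (Inner b2 ts2)
      have nb: "b2 = (\<not> b)" using Inner.prems(2,5) ts Inner unfolding discriminating_def
        by (metis list.set_intros subtrees_refl)
      have ch2: "in_cherry t2 v"
      proof -
        have "Inner b1 ts1 \<noteq> Inner b ts" using ch ts t1 Inner by auto
        then have "Inner b1 ts1 \<in> subtrees t2" using ch(1) ts t1 by auto
        then show ?thesis unfolding in_cherry_def using ch by blast
      qed
      from Inner.IH[of t2 v b2 ts2] obtain ys' where ys': "distinct ys'" "set ys' = set (leaves t2)"
        "length ys' \<ge> 2" "last ys' = v" "\<forall>x y. x \<noteq> y \<longrightarrow> (cotree_adj t2 x y \<longleftrightarrow> {x,y} \<in> E0 (sel b2) ys')"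
        using ts Inner.prems T ch2 cater_child disc_child dl Inner
        by (metis list.set_intros)
      have pn: "p \<notin> set (leaves t2)" using dl t1 by auto
      show ?thesis
        apply (intro exI[of _ "p # ys'"])
        using ys' pn nb T Inner.prems(5) ts t1 adj2[OF pn] E0_cons_sel[of _ _ b p ys']
        by (auto simp: last.simps)
    qed
  next
    case (Inner b1' ts1')
    note t1 = this
    show ?thesis
    proof (cases t2)
      case (Leaf p)
      have nb: "b1' = (\<not> b)" using Inner.prems(2,5) ts t1 unfolding discriminating_def
        by (metis list.set_intros subtrees_refl)
      have ch2: "in_cherry t1 v"
      proof -
        have "Inner b1 ts1 \<noteq> Inner b ts" using ch ts t1 Leaf by auto
        then have "Inner b1 ts1 \<in> subtrees t1" using ch(1) ts Leaf by auto
        then show ?thesis unfolding in_cherry_def using ch by blast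
      qed
      from Inner.IH[of t1 v b1' ts1'] obtain ys' where ys': "distinct ys'" "set ys' = set (leaves t1)"
        "length ys' \<ge> 2" "last ys' = v" "\<forall>x y. x \<noteq> y \<longrightarrow> (cotree_adj t1 x y \<longleftrightarrow> {x,y} \<in> E0 (sel b1') ys')"
        using ts Inner.prems T ch2 cater_child disc_child dl t1
        by (metis list.set_intros)
      have pn: "p \<notin> set (leaves t1)" using dl Leaf by auto
      show ?thesis
        apply (intro exI[of _ "p # ys'"])
        using ys' pn nb T Inner.prems(5) ts Leaf adj2'[OF pn] E0_cons_sel[of _ _ b p ys']
        by (auto simp: last.simps)
    next
      case (Inner b2 ts2)
      have "{0,1} \<subseteq> {i. i < length ts \<and> (\<exists>b' ts'. ts ! i = Inner b' ts')}"
        using ts t1 Inner by auto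
      then have "card {0::nat,1} \<le> card {i. i < length ts \<and> (\<exists>b' ts'. ts ! i = Inner b' ts')}"
        by (intro card_mono) auto
      then show ?thesis using cardc by simp
    qed
  qed
qed


lemma sing_eq: "{a} = {x, y} \<Longrightarrow> x = y" by blast

lemma adj_rel_iff: "(a, b) \<in> adj_rel G \<longleftrightarrow> a \<in> fst G \<and> b \<in> fst G \<and> {a,b} \<in> snd G"
  by (simp add: adj_rel_def)

lemma conn_E0: assumes "distinct ys" "length ys \<ge> 2"
  shows "connected_graph (set ys, E0 (sel b) ys) \<longleftrightarrow> b"
proof
  assume c: "connected_graph (set ys, E0 (sel b) ys)"
  show b
  proof (rule ccontr)
    assume nb: "\<not> b"
    have l: "0 < length ys" "1 < length ys" using assms by auto
    have ne: "ys!0 \<noteq> ys!1" using assms(1) l by (simp add: nth_eq_iff_index_eq)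
    have "(ys!0, ys!1) \<in> (adj_rel (set ys, E0 (sel b) ys))\<^sup>*"
      using c l unfolding connected_graph_def by auto
    then have "ys!0 = ys!1 \<or> (\<exists>w. (ys!0, w) \<in> adj_rel (set ys, E0 (sel b) ys))"
      by (rule converse_rtranclE) auto
    then obtain w where w: "(ys!0, w) \<in> adj_rel (set ys, E0 (sel b) ys)"
      using ne by blast
    then have "w \<in> set ys" "{ys!0, w} \<in> E0 (sel b) ys" unfolding adj_rel_def by auto
    then obtain j where j: "j < length ys" "w = ys!j" "{ys!0, ys!j} \<in> E0 (sel b) ys"
      unfolding in_set_conv_nth by blast
    show False
    proof (cases "j = 0")
      case True
      then have "{ys!0} \<in> E0 (sel b) ys" using j by simp
      then obtain x y where eq: "{ys!0} = {x,y}" and nxy: "x \<noteq> y" using E0_mem[OF _ assms(1)] by blast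
      show False using sing_eq[OF eq] nxy by simp
    next
      case False
      then show False using j E0_K[OF assms(1), of 0 j "sel b"] nb by simp
    qed
  qed
next
  assume b: b
  let ?G = "(set ys, E0 (sel b) ys)"
  have l: "0 < length ys" using assms by auto
  have star: "(x, ys!0) \<in> (adj_rel ?G)\<^sup>* \<and> (ys!0, x) \<in> (adj_rel ?G)\<^sup>*" if "x \<in> set ys" for x
  proof -
    have "\<exists>j<length ys. ys!j = x" using that by (simp add: in_set_conv_nth)
    then obtain j where j0: "j < length ys" "ys!j = x" by blast
    then have j: "j < length ys" "x = ys!j" by simp_all
    show ?thesis
    proof (cases "j = 0")
      case True then have "x = ys!0" using j by simp
      then show ?thesis by simp
    next
      case False
      then have e: "{ys!0, ys!j} \<in> E0 (sel b) ys" using E0_K[OF assms(1), of 0 j "sel b"] j b by simp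
      have m: "ys!0 \<in> set ys" "ys!j \<in> set ys" using j l by auto
      have e': "{ys!j, ys!0} \<in> E0 (sel b) ys"
        by (subst insert_commute) (rule e)
      have a1: "(ys!j, ys!0) \<in> adj_rel ?G" by (simp add: adj_rel_iff m e')
      have a2: "(ys!0, ys!j) \<in> adj_rel ?G" by (simp add: adj_rel_iff m e)
      show ?thesis using j(2) r_into_rtrancl[OF a1] r_into_rtrancl[OF a2] by simp
    qed
  qed
  have "set ys \<noteq> {}" using l by auto
  moreover have "(x, y) \<in> (adj_rel ?G)\<^sup>*" if "x \<in> set ys" "y \<in> set ys" for x y
    using star[OF that(1)] star[OF that(2)] by (meson rtrancl_trans)
  ultimately show "connected_graph ?G" unfolding connected_graph_def by simp
qed

lemma edges_from_cat: assumes "cat_with_cherry (induced (X,E) X1) v" "is_graph (X,E)" "X1 \<subseteq> X"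
  shows "\<exists>ys b. distinct ys \<and> set ys = X1 \<and> length ys \<ge> 2 \<and> last ys = v \<and> {e\<in>E. e \<subseteq> X1} = E0 (sel b) ys"
proof -
  obtain T where T: "explains T (X1, {e\<in>E. e \<subseteq> X1})" "discriminating T" "caterpillar T" "in_cherry T v"
    using assms(1) unfolding cat_with_cherry_def induced_def by auto
  obtain b ts where Tb: "T = Inner b ts"
    using T(4) unfolding in_cherry_def by (cases T) auto
  have dl: "distinct (leaves T)" "set (leaves T) = X1" using T(1) unfolding explains_def by auto
  have ex: "\<forall>x\<in>X1. \<forall>y\<in>X1. x \<noteq> y \<longrightarrow> ({x, y} \<in> E \<longleftrightarrow> cotree_adj T x y)"
    using T(1) unfolding explains_def by auto
  obtain ys where ys: "distinct ys" "set ys = set (leaves T)" "length ys \<ge> 2" "last ys = v"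
    "\<forall>x y. x \<noteq> y \<longrightarrow> (cotree_adj T x y \<longleftrightarrow> {x,y} \<in> E0 (sel b) ys)"
    using extract_cat[OF T(3) T(2) dl(1) T(4) Tb] by blast
  have "{e\<in>E. e \<subseteq> X1} = E0 (sel b) ys"
  proof (intro set_eqI iffI)
    fix e assume e: "e \<in> {e\<in>E. e \<subseteq> X1}"
    then have "e \<in> E" by simp
    then obtain x y where xy: "e = {x,y}" "x \<noteq> y" using assms(2) unfolding is_graph_def by auto
    then show "e \<in> E0 (sel b) ys" using e ex ys(5) by auto
  next
    fix e assume e: "e \<in> E0 (sel b) ys"
    then obtain x y where xy: "e = {x,y}" "x \<noteq> y" "x \<in> set ys" "y \<in> set ys"
      using E0_mem[OF e ys(1)] by blast
    then show "e \<in> {e\<in>E. e \<subseteq> X1}" using e ex ys(5) ys(2) dl(2) by auto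
  qed
  then show ?thesis using ys dl by blast
qed


lemma del_ind: "del_vertex (induced (X,E) Y) v = (Y - {v}, {e\<in>E. e \<subseteq> Y - {v}})"
  by (auto simp: del_vertex_def induced_def)

lemma del_top: "del_vertex (X,E) v = (X - {v}, {e\<in>E. e \<subseteq> X - {v}})"
  by (simp add: del_vertex_def induced_def)

lemma restrict_edges:
  assumes "distinct ys" "distinct zs" "set ys \<inter> set zs = {v}" "E = E0 p ys \<union> E0 p zs \<union> C"
    "\<forall>e\<in>C. \<exists>y z. e = {y,z} \<and> y \<in> set ys - {v} \<and> z \<in> set zs - {v}"
  shows "{e\<in>E. e \<subseteq> set ys} = E0 p ys"
proof (intro set_eqI iffI)
  fix e assume e: "e \<in> E0 p ys"
  then obtain x y where "e = {x,y}" "x \<in> set ys" "y \<in> set ys" using E0_mem[OF e assms(1)] by blast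
  then show "e \<in> {e\<in>E. e \<subseteq> set ys}" using e assms(4) by auto
next
  fix e assume e: "e \<in> {e\<in>E. e \<subseteq> set ys}"
  then have eE: "e \<in> E" and sub: "e \<subseteq> set ys" by auto
  show "e \<in> E0 p ys"
  proof (rule ccontr)
    assume n: "e \<notin> E0 p ys"
    then have "e \<in> E0 p zs \<or> e \<in> C" using eE assms(4) by auto
    then show False
    proof
      assume ez: "e \<in> E0 p zs"
      then obtain x y where xy: "e = {x,y}" "x \<noteq> y" "x \<in> set zs" "y \<in> set zs" using E0_mem[OF ez assms(2)] by blast
      then have "x \<in> set ys" "y \<in> set ys" using sub by auto
      then have "x \<in> set ys \<inter> set zs" "y \<in> set ys \<inter> set zs" using xy by auto
      then have "x = v" "y = v" using assms(3) by auto
      then show False using xy by simp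
    next
      assume "e \<in> C"
      then obtain y z where yz: "e = {y,z}" "z \<in> set zs - {v}" using assms(5) by blast
      then have "z \<in> set ys" using sub by auto
      then have "z \<in> set ys \<inter> set zs" using yz by auto
      then show False using yz assms(3) by auto
    qed
  qed
qed

lemma P2:
  assumes g: "is_graph (X, E)" and c4: "card X \<ge> 4" and pc: "polar_cat_condition (X, E) v ys zs"
  shows "polar_cat_at (X, E) v (set ys) (set zs)"
proof -
  have h: "v \<in> X" "distinct ys" "distinct zs" "length ys \<ge> 2" "length zs \<ge> 2"
     "last ys = v" "last zs = v" "set ys \<inter> set zs = {v}" "set ys \<union> set zs = X"
    using pc unfolding polar_cat_condition_def by auto
  define Y where "Y = set ys"
  define Z where "Z = set zs"
  define CR where "CR = {{y, z} | y z. y \<in> Y - {v} \<and> z \<in> Z - {v}}"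
  obtain c where Ec: "E = E0 (sel c) ys \<union> E0 (sel c) zs \<union> (if c then {} else CR)"
    and cn: "connected_graph (induced (X,E) Y) = c" "connected_graph (induced (X,E) Z) = c"
  proof (cases "connected_graph (induced (X,E) Y)")
    case True
    then have "connected_graph (induced (X,E) Z)" "E = odd_edges ys \<union> odd_edges zs"
      using pc unfolding polar_cat_condition_def Y_def Z_def by auto
    then show ?thesis using that[of True] True unfolding odd_edges_E0 by simp
  next
    case False
    then have "\<not> connected_graph (induced (X,E) Z)" "E = even_edges ys \<union> even_edges zs \<union> CR"
      using pc unfolding polar_cat_condition_def Y_def Z_def CR_def by auto
    then show ?thesis using that[of False] False unfolding even_edges_E0 by simp
  qed
  have CRd: "\<forall>e\<in>(if c then {} else CR). \<exists>y z. e = {y,z} \<and> y \<in> set ys - {v} \<and> z \<in> set zs - {v}"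
    unfolding CR_def Y_def Z_def by auto
  have CRd': "\<forall>e\<in>(if c then {} else CR). \<exists>y z. e = {y,z} \<and> y \<in> set zs - {v} \<and> z \<in> set ys - {v}"
  proof
    fix e assume e: "e \<in> (if c then {} else CR)"
    obtain y z where yz: "e = {y,z}" "y \<in> set ys - {v}" "z \<in> set zs - {v}"
      using bspec[OF CRd e] by (elim exE conjE)
    have ez: "e = {z,y}" using yz(1) by (simp only: insert_commute)
    show "\<exists>y z. e = {y,z} \<and> y \<in> set zs - {v} \<and> z \<in> set ys - {v}"
      by (rule exI[of _ z], rule exI[of _ y]) (use ez yz in simp)
  qed
  have EY: "{e\<in>E. e \<subseteq> Y} = E0 (sel c) ys"
    unfolding Y_def by (rule restrict_edges[OF h(2,3,8) Ec CRd])
  have EZ: "{e\<in>E. e \<subseteq> Z} = E0 (sel c) zs"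
  proof -
    have i: "set zs \<inter> set ys = {v}" using h(8) by (simp add: Int_commute)
    have uc: "E0 (sel c) ys \<union> E0 (sel c) zs = E0 (sel c) zs \<union> E0 (sel c) ys" by (rule Un_commute)
    have Ec': "E = E0 (sel c) zs \<union> E0 (sel c) ys \<union> (if c then {} else CR)" using Ec unfolding uc .
    show ?thesis unfolding Z_def by (rule restrict_edges[OF h(3) h(2) i Ec' CRd'])
  qed
  have IY: "induced (X,E) Y = (set ys, E0 (sel c) ys)" using EY Y_def by (simp add: induced_def)
  have IZ: "induced (X,E) Z = (set zs, E0 (sel c) zs)" using EZ Z_def by (simp add: induced_def)
  have XYZ: "X = Y \<union> Z" using h Y_def Z_def by simp
  have memE0: "e \<subseteq> Y \<or> e \<subseteq> Z" if "e \<in> E0 (sel c) ys \<union> E0 (sel c) zs" for e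
  proof -
    from that show ?thesis
    proof
      assume e: "e \<in> E0 (sel c) ys"
      show ?thesis using E0_mem[OF e h(2)] Y_def by auto
    next
      assume e: "e \<in> E0 (sel c) zs"
      show ?thesis using E0_mem[OF e h(3)] Z_def by auto
    qed
  qed
  have DV1: "c \<Longrightarrow> del_vertex (X,E) v = disj_union (del_vertex (induced (X,E) Y) v) (del_vertex (induced (X,E) Z) v)"
  proof -
    assume c: c
    have "{e\<in>E. e \<subseteq> X - {v}} = {e\<in>E. e \<subseteq> Y - {v}} \<union> {e\<in>E. e \<subseteq> Z - {v}}"
    proof (intro set_eqI iffI)
      fix e assume e: "e \<in> {e\<in>E. e \<subseteq> X - {v}}"
      then have "e \<subseteq> Y \<or> e \<subseteq> Z" using memE0 Ec c by auto
      then show "e \<in> {e\<in>E. e \<subseteq> Y - {v}} \<union> {e\<in>E. e \<subseteq> Z - {v}}" using e by auto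
    next
      fix e assume "e \<in> {e\<in>E. e \<subseteq> Y - {v}} \<union> {e\<in>E. e \<subseteq> Z - {v}}"
      then show "e \<in> {e\<in>E. e \<subseteq> X - {v}}" using XYZ by auto
    qed
    then show ?thesis unfolding del_ind del_top disj_union_def using XYZ by auto
  qed
  have DV2: "\<not> c \<Longrightarrow> del_vertex (X,E) v = graph_join (del_vertex (induced (X,E) Y) v) (del_vertex (induced (X,E) Z) v)"
  proof -
    assume c: "\<not> c"
    have "{e\<in>E. e \<subseteq> X - {v}} = {e\<in>E. e \<subseteq> Y - {v}} \<union> {e\<in>E. e \<subseteq> Z - {v}} \<union> CR"
    proof (intro set_eqI iffI)
      fix e assume e: "e \<in> {e\<in>E. e \<subseteq> X - {v}}"
      then have "e \<subseteq> Y \<or> e \<subseteq> Z \<or> e \<in> CR" using memE0 Ec c by auto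
      then show "e \<in> {e\<in>E. e \<subseteq> Y - {v}} \<union> {e\<in>E. e \<subseteq> Z - {v}} \<union> CR" using e by auto
    next
      fix e assume "e \<in> {e\<in>E. e \<subseteq> Y - {v}} \<union> {e\<in>E. e \<subseteq> Z - {v}} \<union> CR"
      then show "e \<in> {e\<in>E. e \<subseteq> X - {v}}" using XYZ Ec c unfolding CR_def by auto
    qed
    then show ?thesis unfolding del_ind del_top graph_join_def CR_def using XYZ by auto
  qed
  have ceY: "cat_with_cherry (induced (X,E) Y) v" "caterpillar_explainable (induced (X,E) Y)"
    unfolding IY cat_with_cherry_def caterpillar_explainable_def
    using cat_explains[OF h(2,4), of c] cat_disc[of c ys] cat_cat[of c ys] cat_cherry[OF h(2,4), of c] h(6)
    by (auto intro!: exI[of _ "cat c ys"])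
  have ceZ: "cat_with_cherry (induced (X,E) Z) v" "caterpillar_explainable (induced (X,E) Z)"
    unfolding IZ cat_with_cherry_def caterpillar_explainable_def
    using cat_explains[OF h(3,5), of c] cat_disc[of c zs] cat_cat[of c zs] cat_cherry[OF h(3,5), of c] h(7)
    by (auto intro!: exI[of _ "cat c zs"])
  have cg: "cograph (induced (X,E) Y)" "cograph (induced (X,E) Z)"
    unfolding IY IZ using cograph_E0 h(2,3) by auto
  have cards: "card Y > 1" "card Z > 1"
    using distinct_card[OF h(2)] distinct_card[OF h(3)] h(4,5) Y_def Z_def by simp_all
  have dvor: "del_vertex (X,E) v = graph_join (del_vertex (induced (X,E) Y) v) (del_vertex (induced (X,E) Z) v) \<or>
      del_vertex (X,E) v = disj_union (del_vertex (induced (X,E) Y) v) (del_vertex (induced (X,E) Z) v)"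
    using DV1 DV2 by (cases c) simp_all
  have sub: "Y \<subseteq> X" "Z \<subseteq> X" "Y \<inter> Z = {v}" using XYZ h(8) Y_def Z_def by auto
  have ps: "pseudo_cograph (X,E) v Y Z"
    unfolding pseudo_cograph_def fst_conv using h(1) sub XYZ cg cards dvor
    apply (intro conjI) apply assumption+ done
  have pol: "(connected_graph (induced (X,E) Y) \<and> connected_graph (induced (X,E) Z) \<and>
       del_vertex (X,E) v = disj_union (del_vertex (induced (X,E) Y) v) (del_vertex (induced (X,E) Z) v)) \<or>
      (\<not> connected_graph (induced (X,E) Y) \<and> \<not> connected_graph (induced (X,E) Z) \<and>
       del_vertex (X,E) v = graph_join (del_vertex (induced (X,E) Y) v) (del_vertex (induced (X,E) Z) v))"
    using cn DV1 DV2 by (cases c) simp_all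
  have "polar_cat_at (X, E) v Y Z"
    unfolding polar_cat_at_def fst_conv using ps c4 ceY ceZ pol
    apply (intro conjI) apply assumption+ done
  then show ?thesis using Y_def Z_def by simp
qed


lemma P1:
  assumes g: "is_graph (X, E)" and pa: "polar_cat_at (X, E) v X1 X2"
  shows "\<exists>ys zs. polar_cat_condition (X, E) v ys zs"
proof -
  have pcg: "pseudo_cograph (X,E) v X1 X2"
    and dis: "(connected_graph (induced (X,E) X1) \<and> connected_graph (induced (X,E) X2) \<and>
       del_vertex (X,E) v = disj_union (del_vertex (induced (X,E) X1) v) (del_vertex (induced (X,E) X2) v)) \<or>
      (\<not> connected_graph (induced (X,E) X1) \<and> \<not> connected_graph (induced (X,E) X2) \<and>
       del_vertex (X,E) v = graph_join (del_vertex (induced (X,E) X1) v) (del_vertex (induced (X,E) X2) v))"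
    and cw1: "cat_with_cherry (induced (X,E) X1) v" and cw2: "cat_with_cherry (induced (X,E) X2) v"
    using pa unfolding polar_cat_at_def by simp_all
  note pd = pcg[unfolded pseudo_cograph_def fst_conv]
  have h1: "X1 \<subseteq> X" using pd by (elim conjE) assumption
  have h2: "X2 \<subseteq> X" using pd by (elim conjE) assumption
  have h3: "v \<in> X" using pd by (elim conjE) assumption
  have h4: "X = X1 \<union> X2" using pd by (elim conjE) assumption
  have h5: "X1 \<inter> X2 = {v}" using pd by (elim conjE) assumption
  note h = h1 h2 h3 h4 h5
  obtain ys b1 where y: "distinct ys" "set ys = X1" "length ys \<ge> 2" "last ys = v"
      "{e\<in>E. e \<subseteq> X1} = E0 (sel b1) ys"
    using edges_from_cat[OF cw1 g h(1)] by blast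
  obtain zs b2 where z: "distinct zs" "set zs = X2" "length zs \<ge> 2" "last zs = v"
      "{e\<in>E. e \<subseteq> X2} = E0 (sel b2) zs"
    using edges_from_cat[OF cw2 g h(2)] by blast
  have IY: "induced (X,E) X1 = (set ys, E0 (sel b1) ys)" by (simp add: induced_def y(2,5))
  have IZ: "induced (X,E) X2 = (set zs, E0 (sel b2) zs)" by (simp add: induced_def z(2,5))
  have cY: "connected_graph (induced (X,E) X1) \<longleftrightarrow> b1" by (simp add: IY conn_E0[OF y(1) y(3)])
  have cZ: "connected_graph (induced (X,E) X2) \<longleftrightarrow> b2" by (simp add: IZ conn_E0[OF z(1) z(3)])
  have vX: "v \<in> X1" "v \<in> X2" using h(5) by auto
  have gE: "\<forall>e\<in>E. \<exists>x y. e = {x, y} \<and> x \<noteq> y \<and> x \<in> X \<and> y \<in> X"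
    using g by (simp add: is_graph_def)
  have Eall: "e \<in> {e\<in>E. e \<subseteq> X1} \<or> e \<in> {e\<in>E. e \<subseteq> X2} \<or> e \<in> {e\<in>E. e \<subseteq> X - {v}}" if e: "e \<in> E" for e
  proof -
    obtain x y where xy: "e = {x,y}" "x \<in> X" "y \<in> X" using bspec[OF gE e] by (elim exE conjE)
    have xX: "x \<in> X1 \<or> x \<in> X2" "y \<in> X1 \<or> y \<in> X2" using xy h(4) by auto
    show ?thesis
    proof (cases "x = v \<or> y = v")
      case True
      then show ?thesis using xX vX e xy(1) by auto
    next
      case False
      then show ?thesis using e xy by auto
    qed
  qed
  have sub1: "{e\<in>E. e \<subseteq> X1 - {v}} \<subseteq> {e\<in>E. e \<subseteq> X1}" "{e\<in>E. e \<subseteq> X2 - {v}} \<subseteq> {e\<in>E. e \<subseteq> X2}"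
    by auto
  let ?CR = "{{y, z} | y z. y \<in> set ys - {v} \<and> z \<in> set zs - {v}}"
  have cond: "(connected_graph (induced (X,E) (set ys)) \<and> connected_graph (induced (X,E) (set zs)) \<and>
       E = odd_edges ys \<union> odd_edges zs) \<or>
      (\<not> connected_graph (induced (X,E) (set ys)) \<and> \<not> connected_graph (induced (X,E) (set zs)) \<and>
       E = even_edges ys \<union> even_edges zs \<union> ?CR)"
    using dis
  proof
    assume d: "connected_graph (induced (X,E) X1) \<and> connected_graph (induced (X,E) X2) \<and>
       del_vertex (X,E) v = disj_union (del_vertex (induced (X,E) X1) v) (del_vertex (induced (X,E) X2) v)"
    then have b: b1 b2 using cY cZ by simp_all
    from d have "snd (del_vertex (X,E) v) = snd (disj_union (del_vertex (induced (X,E) X1) v) (del_vertex (induced (X,E) X2) v))"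
      by simp
    then have D: "{e\<in>E. e \<subseteq> X - {v}} = {e\<in>E. e \<subseteq> X1 - {v}} \<union> {e\<in>E. e \<subseteq> X2 - {v}}"
      unfolding del_ind del_top disj_union_def by simp
    have "E = {e\<in>E. e \<subseteq> X1} \<union> {e\<in>E. e \<subseteq> X2}"
    proof (intro equalityI subsetI)
      fix e assume e: "e \<in> E"
      show "e \<in> {e\<in>E. e \<subseteq> X1} \<union> {e\<in>E. e \<subseteq> X2}"
        using Eall[OF e] D sub1 by blast
    qed auto
    then have "E = odd_edges ys \<union> odd_edges zs" unfolding odd_edges_E0 using y(5) z(5) b by simp
    then show ?thesis using d y(2) z(2) by simp
  next
    assume d: "\<not> connected_graph (induced (X,E) X1) \<and> \<not> connected_graph (induced (X,E) X2) \<and>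
       del_vertex (X,E) v = graph_join (del_vertex (induced (X,E) X1) v) (del_vertex (induced (X,E) X2) v)"
    then have b: "\<not> b1" "\<not> b2" using cY cZ by simp_all
    from d have "snd (del_vertex (X,E) v) = snd (graph_join (del_vertex (induced (X,E) X1) v) (del_vertex (induced (X,E) X2) v))"
      by simp
    then have D: "{e\<in>E. e \<subseteq> X - {v}} = {e\<in>E. e \<subseteq> X1 - {v}} \<union> {e\<in>E. e \<subseteq> X2 - {v}} \<union> ?CR"
      unfolding del_ind del_top graph_join_def y(2) z(2) by simp
    have CRE: "?CR \<subseteq> E"
    proof -
      have "?CR \<subseteq> {e\<in>E. e \<subseteq> X - {v}}" unfolding D by blast
      then show ?thesis by blast
    qed
    have "E = {e\<in>E. e \<subseteq> X1} \<union> {e\<in>E. e \<subseteq> X2} \<union> ?CR"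
    proof (intro equalityI subsetI)
      fix e assume e: "e \<in> E"
      show "e \<in> {e\<in>E. e \<subseteq> X1} \<union> {e\<in>E. e \<subseteq> X2} \<union> ?CR"
        using Eall[OF e] D sub1 by blast
    next
      fix e assume "e \<in> {e\<in>E. e \<subseteq> X1} \<union> {e\<in>E. e \<subseteq> X2} \<union> ?CR"
      then show "e \<in> E" using CRE by blast
    qed
    then have "E = even_edges ys \<union> even_edges zs \<union> ?CR" unfolding even_edges_E0 using y(5) z(5) b by simp
    then show ?thesis using d y(2) z(2) by simp
  qed
  have "polar_cat_condition (X, E) v ys zs"
    unfolding polar_cat_condition_def fst_conv snd_conv
    using h(3) y(1-4) z(1-4) h(4,5) cond by simp
  then show ?thesis by blast
qed

theorem mainTheorem15:
  fixes X :: "'a set" and E :: "'a set set"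
  assumes "is_graph (X, E)" and "card X \<ge> 4"
  shows "(polar_cat (X, E) \<longleftrightarrow> (\<exists>v ys zs. polar_cat_condition (X, E) v ys zs)) \<and>
         (\<forall>v ys zs. polar_cat_condition (X, E) v ys zs \<longrightarrow>
            polar_cat_at (X, E) v (set ys) (set zs))"
proof -
  have A: "\<forall>v ys zs. polar_cat_condition (X, E) v ys zs \<longrightarrow> polar_cat_at (X, E) v (set ys) (set zs)"
    using P2[OF assms] by blast
  have B: "polar_cat (X, E) \<longleftrightarrow> (\<exists>v ys zs. polar_cat_condition (X, E) v ys zs)"
  proof
    assume "polar_cat (X, E)"
    then obtain v X1 X2 where "polar_cat_at (X, E) v X1 X2" unfolding polar_cat_def by blast
    then show "\<exists>v ys zs. polar_cat_condition (X, E) v ys zs" using P1[OF assms(1)] by blast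
  next
    assume "\<exists>v ys zs. polar_cat_condition (X, E) v ys zs"
    then obtain v ys zs where "polar_cat_condition (X, E) v ys zs" by blast
    then show "polar_cat (X, E)" unfolding polar_cat_def using A by blast
  qed
  show ?thesis using A B by blast
qed

end
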